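(* Let $n_\text{in}\ge1$, $\mathbf{W}\in\mathbb{R}^{2\times n_\text{in}}$ with rows $\mathbf{W}_{1,:},\mathbf{W}_{2,:}$, $\mathbf{b}\in\mathbb{R}^{2}$, $\mathbf{c}\in\mathbb{R}^{n_\text{in}}$, $\mathbf{U}=[\mathbf{u}_1\,\ldots\,\mathbf{u}_{n_\text{in}}]\in\mathbb{R}^{n_\text{in}\times n_\text{in}}$, and $\mathcal{P}(\mathbf{U})=\{\mathbf{c}+\sum_j\lambda_j\mathbf{u}_j:\lambda\in[0,1]^{n_\text{in}}\}$. For $i\ge1$, let $N=2^i$ and partition $\mathcal{P}(\mathbf{U})$ (obtained by $i$ rounds of bisecting every cell along $\mathbf{u}_1$ with ratio $r=\tfrac12$) into the cells $\mathcal{P}_k=\{\mathbf{c}+\tfrac{k}{N}\mathbf{u}_1+\lambda_1\tfrac1N\mathbf{u}_1+\sum_{j\ge2}\lambda_j\mathbf{u}_j:\lambda\in[0,1]^{n_\text{in}}\}$, $k=0,\ldots,N-1$. Let $\mathcal{P}(\mathbf{V})$ and $\mathcal{P}(\mathbf{V}_k)$ be the images of $\mathcal{P}(\mathbf{U})$ and $\mathcal{P}_k$ under $\mathbf{x}\mapsto\mathbf{W}\mathbf{x}+\mathbf{b}$, and let $R_i=\mathrm{Vol}(\mathcal{B}(\mathbf{V}))-\mathrm{Vol}\big(\bigcup_{k=0}^{N-1}\mathcal{B}(\mathbf{V}_k)\big)$. Then \[ \lim_{i\to\infty}R_i=|\mathbf{W}_{1,:}\mathbf{u}_1|\,|\mathbf{W}_{2,:}\mathbf{u}_1|.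 \]
   Context: For a parallelotope $\mathcal{P}\subset\mathbb{R}^{2}$, $\mathcal{B}(\cdot)$ denotes the smallest axis-aligned rectangle containing it (the Cartesian product over coordinates of the interval between the minimal and maximal coordinate of its vertices); $\mathrm{Vol}$ is Lebesgue area. *)

theory Defs
  imports "HOL-Analysis.Analysis"
begin

definition par :: "real^'n \<Rightarrow> real^'n^'n \<Rightarrow> (real^'n) set" where
  "par c U = {c + (\<Sum>j\<in>UNIV. (l $ j) *\<^sub>R column j U) | l. \<forall>j. 0 \<le> l $ j \<and> l $ j \<le> 1}"

definition cell :: "real^'n \<Rightarrow> real^'n^'n \<Rightarrow> 'n \<Rightarrow> nat \<Rightarrow> nat \<Rightarrow> (real^'n) set" where
  "cell c U j1 N k = {c + (real k / real N) *\<^sub>R column j1 U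
       + ((l $ j1) * (1 / real N)) *\<^sub>R column j1 U
       + (\<Sum>j\<in>UNIV - {j1}. (l $ j) *\<^sub>R column j U) | l. \<forall>j. 0 \<le> l $ j \<and> l $ j \<le> 1}"

definition bbox :: "(real^2) set \<Rightarrow> (real^2) set" where
  "bbox S = cbox (\<chi> i. Inf ((\<lambda>x. x $ i) ` S)) (\<chi> i. Sup ((\<lambda>x. x $ i) ` S))"

end

theory Submission imports Defs begin

lemma cbox2_measure:
  fixes a b :: "real^2"
  assumes "\<And>i. a$i \<le> b$i"
  shows "measure lebesgue (cbox a b) = (b$1 - a$1) * (b$2 - a$2)"
proof -
  have "a \<in> cbox a b" using assms by (auto simp: mem_box_cart)
  then have "cbox a b \<noteq> {}" by blast
  then have "measure lborel (cbox a b) = prod (\<lambda>i. b$i - a$i) UNIV" by (rule content_cbox_cart)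
  then show ?thesis by (simp add: UNIV_2)
qed

definition bx :: "real^2 \<Rightarrow> real^2 \<Rightarrow> real^2 \<Rightarrow> nat \<Rightarrow> (real^2) set" where
  "bx L D H k = cbox (L + real k *\<^sub>R D) (L + real k *\<^sub>R D + H)"

lemma bx_int:
  assumes "M \<ge> 1"
  shows "bx L D H M \<inter> (\<Union>k<M. bx L D H k) =
    cbox (\<chi> i. L$i + (real M - 1) * D$i + max (D$i) 0) (\<chi> i. L$i + (real M - 1) * D$i + H$i + min (D$i) 0)"
proof (rule set_eqI)
  fix x :: "real^2"
  have one: "(L$i + real M * D$i \<le> x$i \<and> x$i \<le> L$i + real M * D$i + H$i \<and>
       L$i + real k * D$i \<le> x$i \<and> x$i \<le> L$i + real k * D$i + H$i) \<Longrightarrow> k < M \<Longrightarrow>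
      L$i + (real M - 1) * D$i + max (D$i) 0 \<le> x$i \<and> x$i \<le> L$i + (real M - 1) * D$i + H$i + min (D$i) 0"
    for i k
  proof -
    assume h: "L$i + real M * D$i \<le> x$i \<and> x$i \<le> L$i + real M * D$i + H$i \<and>
       L$i + real k * D$i \<le> x$i \<and> x$i \<le> L$i + real k * D$i + H$i" and k: "k < M"
    have kk: "real k \<le> real M - 1" using k by linarith
    show ?thesis
    proof (cases "D$i \<ge> 0")
      case True
      have "real k * D$i \<le> (real M - 1) * D$i" using kk True by (rule mult_right_mono)
      then show ?thesis using h True by (simp add: algebra_simps)
    next
      case False
      have "(real M - 1) * D$i \<le> real k * D$i" using kk False by (intro mult_right_mono_neg) auto
      then show ?thesis using h False by (simp add: algebra_simps)
    qed
  qed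
  have two: "L$i + (real M - 1) * D$i + max (D$i) 0 \<le> x$i \<and> x$i \<le> L$i + (real M - 1) * D$i + H$i + min (D$i) 0
    \<Longrightarrow> (L$i + real M * D$i \<le> x$i \<and> x$i \<le> L$i + real M * D$i + H$i \<and>
       L$i + real (M-1) * D$i \<le> x$i \<and> x$i \<le> L$i + real (M-1) * D$i + H$i)" for i
    using assms by (cases "D$i \<ge> 0") (auto simp: algebra_simps of_nat_diff)
  show "x \<in> bx L D H M \<inter> (\<Union>k<M. bx L D H k) \<longleftrightarrow> x \<in> cbox (\<chi> i. L$i + (real M - 1) * D$i + max (D$i) 0) (\<chi> i. L$i + (real M - 1) * D$i + H$i + min (D$i) 0)" (is "_ \<longleftrightarrow> x \<in> ?R")
  proof
    assume "x \<in> bx L D H M \<inter> (\<Union>k<M. bx L D H k)"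
    then obtain k where "k < M" "x \<in> bx L D H M" "x \<in> bx L D H k" by auto
    then show "x \<in> ?R" using one by (auto simp: bx_def mem_box_cart)
  next
    assume "x \<in> cbox (\<chi> i. L$i + (real M - 1) * D$i + max (D$i) 0) (\<chi> i. L$i + (real M - 1) * D$i + H$i + min (D$i) 0)"
    then have "x \<in> bx L D H M" "x \<in> bx L D H (M-1)" using two by (auto simp: bx_def mem_box_cart)
    then show "x \<in> bx L D H M \<inter> (\<Union>k<M. bx L D H k)" using assms by auto
  qed
qed

lemma bx_union:
  assumes "\<And>i. \<bar>D$i\<bar> \<le> H$i" "M \<ge> 1"
  shows "measure lebesgue (\<Union>k<M. bx L D H k) = real M * (H$1 * H$2) - (real M - 1) * ((H$1 - \<bar>D$1\<bar>) * (H$2 - \<bar>D$2\<bar>))"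
  using assms(2)
proof (induction M rule: dec_induct)
  case base
  have "measure lebesgue (bx L D H 0) = H$1 * H$2"
    unfolding bx_def using assms(1)[of 1] assms(1)[of 2] assms(1) by (subst cbox2_measure) (auto intro: order.trans[OF abs_ge_zero])
  then show ?case by (simp add: lessThan_Suc)
next
  case (step M)
  have fm: "(\<Union>k<M. bx L D H k) \<in> fmeasurable lborel" by (auto simp: bx_def intro!: fmeasurable.finite_UN)
  have fm2: "bx L D H M \<in> fmeasurable lborel" by (simp add: bx_def)
  have sets: "S \<in> fmeasurable lborel \<Longrightarrow> measure lebesgue S = measure lborel S" for S
    by (simp add: fmeasurable_def)
  have e: "(\<Union>k<Suc M. bx L D H k) = (\<Union>k<M. bx L D H k) \<union> bx L D H M"
    by (auto simp: lessThan_Suc)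
  have "measure lebesgue (\<Union>k<Suc M. bx L D H k) = measure lborel ((\<Union>k<M. bx L D H k) \<union> bx L D H M)"
    using fm fm2 by (simp add: e sets fmeasurable.Un)
  also have "\<dots> = measure lborel (\<Union>k<M. bx L D H k) + measure lborel (bx L D H M) - measure lborel (bx L D H M \<inter> (\<Union>k<M. bx L D H k))"
    using measure_Un3[OF fm fm2] by (simp add: Int_commute)
  also have "measure lborel (bx L D H M \<inter> (\<Union>k<M. bx L D H k)) = (H$1 - \<bar>D$1\<bar>) * (H$2 - \<bar>D$2\<bar>)"
  proof -
    have hb: "D$i \<le> H$i" "0 \<le> H$i + D$i" for i using assms(1)[of i] by (simp_all add: abs_le_iff)
    show ?thesis unfolding bx_int[OF step(1)]
      by (subst cbox2_measure[simplified]) (auto simp: abs_if max_def min_def hb)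
  qed
  also have "measure lborel (bx L D H M) = H$1 * H$2"
    unfolding bx_def using assms(1)[of 1] assms(1)[of 2] assms(1) by (subst cbox2_measure[simplified]) (auto intro: order.trans[OF abs_ge_zero])
  finally have fin: "measure lebesgue (\<Union>k<Suc M. bx L D H k) = measure lborel (\<Union>k<M. bx L D H k) + H $ 1 * H $ 2 - (H$1 - \<bar>D$1\<bar>) * (H$2 - \<bar>D$2\<bar>)" .
  have ih: "measure lborel (\<Union>k<M. bx L D H k) = real M * (H$1 * H$2) - (real M - 1) * ((H$1 - \<bar>D$1\<bar>) * (H$2 - \<bar>D$2\<bar>))"
    using step.IH sets[OF fm] by simp
  show ?case unfolding fin ih by (simp add: algebra_simps)
qed

lemma coord_inf_sup:
  fixes g :: "'n::finite \<Rightarrow> real"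
  shows "Inf {K + (\<Sum>j\<in>UNIV. l$j * g j) | l::real^'n. \<forall>j. 0 \<le> l$j \<and> l$j \<le> 1} = K + (\<Sum>j\<in>UNIV. min 0 (g j))"
    and "Sup {K + (\<Sum>j\<in>UNIV. l$j * g j) | l::real^'n. \<forall>j. 0 \<le> l$j \<and> l$j \<le> 1} = K + (\<Sum>j\<in>UNIV. max 0 (g j))"
proof -
  let ?S = "{K + (\<Sum>j\<in>UNIV. l$j * g j) | l::real^'n. \<forall>j. 0 \<le> l$j \<and> l$j \<le> 1}"
  have lo: "min 0 (g j) \<le> l$j * g j" and hi: "l$j * g j \<le> max 0 (g j)"
    if "\<forall>j. 0 \<le> l$j \<and> l$j \<le> 1" for l :: "real^'n" and j
  proof -
    have a: "0 \<le> l$j" "l$j \<le> 1" using that by auto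
    show "min 0 (g j) \<le> l$j * g j"
    proof (cases "g j \<ge> 0")
      case True then show ?thesis using a by simp
    next
      case False
      have "1 * g j \<le> l$j * g j" using a False by (intro mult_right_mono_neg) auto
      then show ?thesis by simp
    qed
    show "l$j * g j \<le> max 0 (g j)"
    proof (cases "g j \<ge> 0")
      case True
      have "l$j * g j \<le> 1 * g j" using a True by (intro mult_right_mono) auto
      then show ?thesis by simp
    next
      case False then show ?thesis using a by (simp add: mult_nonneg_nonpos)
    qed
  qed
  let ?l1 = "\<chi> j. if g j < 0 then 1 else (0::real)"
  let ?l2 = "\<chi> j. if g j > 0 then 1 else (0::real)"
  have m1: "K + (\<Sum>j\<in>UNIV. min 0 (g j)) \<in> ?S"
  proof -
    have "(\<Sum>j\<in>UNIV. min 0 (g j)) = (\<Sum>j\<in>UNIV. ?l1$j * g j)" by (intro sum.cong) auto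
    then show ?thesis by (intro CollectI exI[of _ ?l1]) auto
  qed
  have m2: "K + (\<Sum>j\<in>UNIV. max 0 (g j)) \<in> ?S"
  proof -
    have "(\<Sum>j\<in>UNIV. max 0 (g j)) = (\<Sum>j\<in>UNIV. ?l2$j * g j)" by (intro sum.cong) auto
    then show ?thesis by (intro CollectI exI[of _ ?l2]) auto
  qed
  show "Inf ?S = K + (\<Sum>j\<in>UNIV. min 0 (g j))"
    by (rule cInf_eq_minimum[OF m1]) (auto intro!: sum_mono lo)
  show "Sup ?S = K + (\<Sum>j\<in>UNIV. max 0 (g j))"
    by (rule cSup_eq_maximum[OF m2]) (auto intro!: sum_mono hi)
qed

lemma row_eq: "row i W = W$i"
  by (simp add: row_def vec_eq_iff)

lemma gen_img: "f ` {g l | l. P l} = {f (g l) | l. P l}"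
  by blast

lemma par_coord:
  fixes W :: "real^'n^2"
  shows "(\<lambda>x. x$i) ` ((\<lambda>x. W *v x + b) ` par c U) =
    {(row i W \<bullet> c + b$i) + (\<Sum>j\<in>UNIV. l$j * (row i W \<bullet> column j U)) | l::real^'n. \<forall>j. 0 \<le> l$j \<and> l$j \<le> 1}"
proof -
  have e: "(W *v (c + (\<Sum>j\<in>UNIV. (l $ j) *\<^sub>R column j U)) + b)$i = (row i W \<bullet> c + b$i) + (\<Sum>j\<in>UNIV. l$j * (row i W \<bullet> column j U))" for l :: "real^'n"
    by (simp add: matrix_vector_mul_component row_eq inner_add_right inner_sum_right)
  show ?thesis unfolding par_def image_image gen_img e ..
qed

lemma cell_coord:
  fixes W :: "real^'n^2"
  shows "(\<lambda>x. x$i) ` ((\<lambda>x. W *v x + b) ` cell c U j1 N k) =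
    {(row i W \<bullet> c + b$i + real k / real N * (row i W \<bullet> column j1 U)) + (\<Sum>j\<in>UNIV. l$j * (if j = j1 then (row i W \<bullet> column j U) / real N else row i W \<bullet> column j U)) | l::real^'n. \<forall>j. 0 \<le> l$j \<and> l$j \<le> 1}"
proof -
  have s: "(\<Sum>j\<in>UNIV. l$j * (if j = j1 then (row i W \<bullet> column j U) / real N else row i W \<bullet> column j U))
     = l$j1 * (1 / real N) * (row i W \<bullet> column j1 U) + (\<Sum>j\<in>UNIV-{j1}. l$j * (row i W \<bullet> column j U))" for l :: "real^'n"
    by (subst sum.remove[of UNIV j1]) auto
  have e: "(W *v (c + (real k / real N) *\<^sub>R column j1 U
       + ((l $ j1) * (1 / real N)) *\<^sub>R column j1 U
       + (\<Sum>j\<in>UNIV - {j1}. (l $ j) *\<^sub>R column j U)) + b)$i = (row i W \<bullet> c + b$i + real k / real N * (row i W \<bullet> column j1 U)) + (\<Sum>j\<in>UNIV. l$j * (if j = j1 then (row i W \<bullet> column j U) / real N else row i W \<bullet> column j U))" for l :: "real^'n"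
    unfolding s by (simp add: matrix_vector_mul_component row_eq inner_add_right inner_sum_right)
  show ?thesis unfolding cell_def image_image gen_img e ..
qed


lemma max_min_abs: "max 0 (x::real) = min 0 x + \<bar>x\<bar>" by auto

theorem lemma2:
  fixes W :: "real^'n^2" and b :: "real^2" and c :: "real^'n"
    and U :: "real^'n^'n" and j1 :: 'n
  shows "(\<lambda>i::nat. measure lebesgue (bbox ((\<lambda>x. W *v x + b) ` par c U))
            - measure lebesgue (\<Union>k<2^i. bbox ((\<lambda>x. W *v x + b) ` cell c U j1 (2^i) k)))
         \<longlonglongrightarrow> \<bar>row 1 W \<bullet> column j1 U\<bar> * \<bar>row 2 W \<bullet> column j1 U\<bar>"
proof -
  define g where "g i j = row i W \<bullet> column j U" for i j
  define K where "K i = row i W \<bullet> c + b$i" for i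
  define s where "s i = (\<Sum>j\<in>UNIV-{j1}. \<bar>g i j\<bar>)" for i
  have s0: "0 \<le> s i" for i unfolding s_def by (intro sum_nonneg) auto
  have A: "measure lebesgue (bbox ((\<lambda>x. W *v x + b) ` par c U)) = (\<bar>g 1 j1\<bar> + s 1) * (\<bar>g 2 j1\<bar> + s 2)"
  proof -
    have bb: "bbox ((\<lambda>x. W *v x + b) ` par c U) = cbox (\<chi> i. K i + (\<Sum>j\<in>UNIV. min 0 (g i j))) (\<chi> i. K i + (\<Sum>j\<in>UNIV. max 0 (g i j)))"
      unfolding bbox_def par_coord coord_inf_sup g_def K_def ..
    have w: "(\<Sum>j\<in>UNIV. max 0 (g i j)) - (\<Sum>j\<in>UNIV. min 0 (g i j)) = \<bar>g i j1\<bar> + s i" for i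
      unfolding s_def max_min_abs sum.distrib by (simp add: sum.remove[of UNIV j1])
    show ?thesis unfolding bb
      by (subst cbox2_measure) (auto simp: w intro!: sum_mono)
  qed
  have B: "measure lebesgue (\<Union>k<N. bbox ((\<lambda>x. W *v x + b) ` cell c U j1 N k))
      = real N * ((\<bar>g 1 j1\<bar> / N + s 1) * (\<bar>g 2 j1\<bar> / N + s 2)) - (real N - 1) * (s 1 * s 2)"
    if N: "N \<ge> 1" for N :: nat
  proof -
    define g' where "g' i j = (if j = j1 then g i j / real N else g i j)" for i j
    define L where "L = (\<chi> i. K i + (\<Sum>j\<in>UNIV. min 0 (g' i j)))"
    define D where "D = (\<chi> i. g i j1 / real N)"
    define H where "H = (\<chi> i. (\<Sum>j\<in>UNIV. \<bar>g' i j\<bar>))"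
    have Hs: "H$i = \<bar>g i j1\<bar> / real N + s i" for i
      unfolding H_def s_def g'_def by (simp add: sum.remove[of UNIV j1])
    have Dl: "\<bar>D$i\<bar> = \<bar>g i j1\<bar> / real N" for i unfolding D_def by simp
    have cb: "bbox ((\<lambda>x. W *v x + b) ` cell c U j1 N k) = bx L D H k" for k
    proof -
      have "bbox ((\<lambda>x. W *v x + b) ` cell c U j1 N k) = cbox (\<chi> i. (K i + real k / real N * g i j1) + (\<Sum>j\<in>UNIV. min 0 (g' i j))) (\<chi> i. (K i + real k / real N * g i j1) + (\<Sum>j\<in>UNIV. max 0 (g' i j)))"
        unfolding bbox_def cell_coord coord_inf_sup g_def K_def g'_def ..
      also have "\<dots> = bx L D H k"
        unfolding bx_def L_def D_def H_def max_min_abs sum.distrib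
        by (rule arg_cong2[where f=cbox]) (auto simp: vec_eq_iff algebra_simps)
      finally show ?thesis .
    qed
    have "measure lebesgue (\<Union>k<N. bx L D H k) = real N * (H$1 * H$2) - (real N - 1) * ((H$1 - \<bar>D$1\<bar>) * (H$2 - \<bar>D$2\<bar>))"
      by (rule bx_union[OF _ N]) (simp add: Hs Dl s0)
    then show ?thesis unfolding cb by (simp add: Hs Dl)
  qed
  have R: "measure lebesgue (bbox ((\<lambda>x. W *v x + b) ` par c U))
            - measure lebesgue (\<Union>k<2^i. bbox ((\<lambda>x. W *v x + b) ` cell c U j1 (2^i) k))
       = \<bar>g 1 j1\<bar> * \<bar>g 2 j1\<bar> - \<bar>g 1 j1\<bar> * \<bar>g 2 j1\<bar> * (1/2)^i" for i :: nat
  proof -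
    have N: "(1::nat) \<le> 2^i" by simp
    have p: "(2::real)^i > 0" by simp
    show ?thesis unfolding A B[OF N] using p
      by (simp add: field_simps power_one_over)
  qed
  have "(\<lambda>i::nat. \<bar>g 1 j1\<bar> * \<bar>g 2 j1\<bar> - \<bar>g 1 j1\<bar> * \<bar>g 2 j1\<bar> * (1/2::real)^i) \<longlonglongrightarrow> \<bar>g 1 j1\<bar> * \<bar>g 2 j1\<bar> - \<bar>g 1 j1\<bar> * \<bar>g 2 j1\<bar> * 0"
    by (intro tendsto_intros LIMSEQ_realpow_zero) auto
  then show ?thesis unfolding R g_def by simp
qed
end
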